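(* If superclub holds at $\omega_1$, i.e. $\clubsuit^{\Diamond}_{\omega_1}$, then $\binom{\omega_1}{\omega}\nrightarrow\binom{\omega_1}{\omega}$: there is a coloring $c:\omega_1\times\omega\to 2$ such that for no $Y\in[\omega_1]^{\omega_1}$ and $Z\in[\omega]^{\omega}$ is $c\restriction(Y\times Z)$ constant.
   Context: $\clubsuit^{\Diamond}_{\omega_1}$ is the existence of a sequence $(S_\alpha\mid\alpha<\omega_1)$ with $S_\alpha\subseteq\alpha$ such that for every $A\in[\omega_1]^{\omega_1}$ there is $B\in[A]^{\omega_1}$ for which $\{\alpha<\omega_1\mid B\cap\alpha=S_\alpha\}$ is stationary in $\omega_1$. The polarized relation $\binom{\alpha}{\beta}\rightarrow\binom{\gamma}{\delta}$ means that for every $c:\alpha\times\beta\to 2$ there are $A\in[\alpha]^\gamma$, $B\in[\beta]^\delta$ with $c\restriction(A\times B)$ constant; $\nrightarrow$ is its negation. *)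

theory Defs
  imports "HOL-Library.Countable_Set"
begin

text \<open>omega_1 is represented by a well-ordered type 'a that is uncountable and all of whose
  proper initial segments are countable (this characterises order type omega_1).
  An ordinal alpha < omega_1 is identified with the set of its predecessors {beta. beta < alpha}.\<close>

definition omega1_type :: "'a::wellorder itself \<Rightarrow> bool" where
  "omega1_type _ \<longleftrightarrow> \<not> countable (UNIV :: 'a set) \<and> (\<forall>\<alpha>::'a. countable {\<beta>. \<beta> < \<alpha>})"

definition unbounded_set :: "'a::wellorder set \<Rightarrow> bool" where
  "unbounded_set C \<longleftrightarrow> (\<forall>\<beta>. \<exists>\<gamma>\<in>C. \<beta> \<le> \<gamma>)"

definition closed_set :: "'a::wellorder set \<Rightarrow> bool" where
  "closed_set C \<longleftrightarrow> (\<forall>\<alpha>. (\<exists>\<beta>. \<beta> < \<alpha>) \<and> (\<forall>\<beta><\<alpha>. \<exists>\<gamma>\<in>C. \<beta> < \<gamma> \<and> \<gamma> < \<alpha>) \<longrightarrow> \<alpha> \<in> C)"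

definition club :: "'a::wellorder set \<Rightarrow> bool" where
  "club C \<longleftrightarrow> closed_set C \<and> unbounded_set C"

definition stationary :: "'a::wellorder set \<Rightarrow> bool" where
  "stationary S \<longleftrightarrow> (\<forall>C. club C \<longrightarrow> S \<inter> C \<noteq> {})"

text \<open>superclub (clubsuit-diamond) at omega_1; [omega_1]^omega_1 = uncountable subsets.\<close>
definition superclub :: "'a::wellorder itself \<Rightarrow> bool" where
  "superclub _ \<longleftrightarrow> (\<exists>S :: 'a \<Rightarrow> 'a set.
     (\<forall>\<alpha>. S \<alpha> \<subseteq> {\<beta>. \<beta> < \<alpha>}) \<and>
     (\<forall>A :: 'a set. \<not> countable A \<longrightarrow>
        (\<exists>B \<subseteq> A. \<not> countable B \<and> stationary {\<alpha>. B \<inter> {\<beta>. \<beta> < \<alpha>} = S \<alpha>})))"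

end

theory Submission
  imports Defs
begin

fun pick :: "(nat \<Rightarrow> nat set) \<Rightarrow> nat \<Rightarrow> nat" where
  "pick W 0 = (LEAST x. x \<in> W 0)"
| "pick W (Suc k) = (LEAST x. x \<in> W (Suc k) \<and> pick W k < x)"

lemma pick_props:
  assumes "\<And>k. infinite (W k)"
  shows "pick W k \<in> W k \<and> pick W k < pick W (Suc k)"
proof -
  have ex: "\<exists>x. x \<in> W j \<and> N < x" for j N
    using assms[of j] by (meson finite_nat_set_iff_bounded_le not_le_imp_less subsetI mem_Collect_eq)
  have mem: "pick W k \<in> W k" for k
  proof (cases k)
    case 0 then show ?thesis using ex[of 0 0] by (auto intro: LeastI)
  next
    case (Suc j)
    then show ?thesis using LeastI_ex[OF ex[of "Suc j" "pick W j"]] by simp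
  qed
  have "pick W k < pick W (Suc k)"
    using LeastI_ex[OF ex[of "Suc k" "pick W k"]] by simp
  with mem show ?thesis by simp
qed

lemma row_exists:
  assumes "countable F" "\<forall>(W,b)\<in>F. infinite W"
  shows "\<exists>r::nat \<Rightarrow> bool. \<forall>(W,b)\<in>F. \<exists>m\<in>W. r m \<noteq> b"
proof (cases "F = {}")
  case True then show ?thesis by auto
next
  case False
  define g where "g = from_nat_into F"
  have rg: "range g = F" using False assms(1) by (simp add: g_def)
  define Wk where "Wk = (\<lambda>k. fst (g k))"
  have inf: "infinite (Wk k)" for k
    using assms(2) rg unfolding Wk_def by (metis (mono_tags, lifting) case_prodD prod.collapse rangeI)
  define m where "m = pick Wk"
  have sm: "strict_mono m" unfolding m_def
    unfolding strict_mono_Suc_iff using pick_props[where W=Wk, OF inf] by blast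
  hence im: "inj m" by (rule strict_mono_imp_inj_on)
  define r where "r = (\<lambda>n. \<not> snd (g (inv m n)))"
  show ?thesis
  proof (intro exI ballI, clarify)
    fix W b assume "(W, b) \<in> F"
    then obtain k where k: "g k = (W, b)" using rg by (metis rangeE)
    have "m k \<in> W" using pick_props[where W=Wk and k=k, OF inf] k unfolding m_def Wk_def by simp
    moreover have "r (m k) \<noteq> b" unfolding r_def using im k by simp
    ultimately show "\<exists>m\<in>W. r m \<noteq> b" by blast
  qed
qed

context
  fixes dummy :: "'a::wellorder itself"
  assumes om: "omega1_type TYPE('a)"
begin

lemma seg_countable: "countable {\<beta>::'a. \<beta> < \<alpha>}"
  using om by (simp add: omega1_type_def)

lemma segle_countable: "countable {\<beta>::'a. \<beta> \<le> \<alpha>}"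
proof -
  have "{\<beta>::'a. \<beta> \<le> \<alpha>} = insert \<alpha> {\<beta>. \<beta> < \<alpha>}" by auto
  thus ?thesis using seg_countable by simp
qed

lemma above_uncountable:
  assumes "\<not> countable (U::'a set)" shows "\<exists>u\<in>U. p < u"
proof (rule ccontr)
  assume "\<not> ?thesis"
  hence "U \<subseteq> {\<beta>. \<beta> \<le> p}" by (auto simp: not_less)
  thus False using assms segle_countable countable_subset by blast
qed

lemma countable_bounded:
  assumes "countable (X::'a set)" shows "\<exists>x. \<forall>t\<in>X. t < x"
proof -
  have "countable (\<Union>t\<in>X. {\<beta>::'a. \<beta> \<le> t})"
    using assms segle_countable by auto
  moreover have "\<not> countable (UNIV::'a set)" using om by (simp add: omega1_type_def)
  ultimately have "\<not> UNIV \<subseteq> (\<Union>t\<in>X. {\<beta>::'a. \<beta> \<le> t})"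
    using countable_subset by blast
  then obtain x where "x \<notin> (\<Union>t\<in>X. {\<beta>::'a. \<beta> \<le> t})" by blast
  thus ?thesis by (auto simp: not_le)
qed

lemma stationary_uncountable:
  assumes "stationary (T::'a set)" shows "\<not> countable T"
proof
  assume "countable T"
  then obtain x where x: "\<forall>t\<in>T. t < x" using countable_bounded by blast
  define C where "C = {\<gamma>. x < \<gamma>}"
  have "closed_set C" unfolding closed_set_def C_def
  proof (intro allI impI)
    fix \<alpha> assume h: "(\<exists>\<beta>. \<beta> < \<alpha>) \<and> (\<forall>\<beta><\<alpha>. \<exists>\<gamma>\<in>{\<gamma>. x < \<gamma>}. \<beta> < \<gamma> \<and> \<gamma> < \<alpha>)"
    then obtain \<beta> where "\<beta> < \<alpha>" by auto
    with h obtain \<gamma> where "x < \<gamma>" "\<gamma> < \<alpha>" by auto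
    thus "\<alpha> \<in> {\<gamma>. x < \<gamma>}" by auto
  qed
  moreover have "unbounded_set C" unfolding unbounded_set_def C_def
  proof
    fix \<beta>
    have "\<not> countable (UNIV::'a set)" using om by (simp add: omega1_type_def)
    then obtain u where "max x \<beta> < u" using above_uncountable by blast
    thus "\<exists>\<gamma>\<in>{\<gamma>. x < \<gamma>}. \<beta> \<le> \<gamma>" by auto
  qed
  ultimately have "T \<inter> C \<noteq> {}" using assms by (auto simp: stationary_def club_def)
  thus False using x C_def by auto
qed

end

theorem mainTheorem6:
  assumes "omega1_type TYPE('a::wellorder)"
    and "superclub TYPE('a)"
  shows "\<exists>c :: 'a \<Rightarrow> nat \<Rightarrow> bool. \<forall>Y Z. \<not> countable Y \<and> infinite Z \<longrightarrow>
           \<not> (\<exists>b. \<forall>y\<in>Y. \<forall>z\<in>Z. c y z = b)"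
proof -
  note om = assms(1)
  obtain S :: "'a \<Rightarrow> 'a set" where Ssub: "\<forall>\<alpha>. S \<alpha> \<subseteq> {\<beta>. \<beta> < \<alpha>}"
    and Sg: "\<forall>A :: 'a set. \<not> countable A \<longrightarrow>
        (\<exists>B \<subseteq> A. \<not> countable B \<and> stationary {\<alpha>. B \<inter> {\<beta>. \<beta> < \<alpha>} = S \<alpha>})"
    using assms(2) unfolding superclub_def by blast
  define R where "R = {(x, y::'a). x < y}"
  have wfR: "wf R" unfolding R_def by (rule wf)
  define Wc where "Wc = (\<lambda>(f::'a \<Rightarrow> nat \<Rightarrow> bool) b \<alpha>. {n. \<forall>\<gamma>\<in>S \<alpha>. f \<gamma> n = b})"
  define Q where "Q = (\<lambda>f \<delta> (r::nat \<Rightarrow> bool). \<forall>\<alpha><\<delta>. \<forall>b. infinite (Wc f b \<alpha>) \<longrightarrow>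
                         (\<exists>m\<in>Wc f b \<alpha>. r m \<noteq> b))"
  define H where "H = (\<lambda>f \<delta>. SOME r. Q f \<delta> r)"
  define c where "c = wfrec R H"
  have Qc: "Q c \<delta> (c \<delta>)" for \<delta>
  proof -
    have ceq: "c \<delta> = H (cut c R \<delta>) \<delta>" unfolding c_def by (rule wfrec[OF wfR])
    have Weq: "Wc (cut c R \<delta>) b \<alpha> = Wc c b \<alpha>" if "\<alpha> < \<delta>" for b \<alpha>
    proof -
      have "\<forall>\<gamma>\<in>S \<alpha>. cut c R \<delta> \<gamma> = c \<gamma>"
      proof
        fix \<gamma> assume "\<gamma> \<in> S \<alpha>"
        hence "\<gamma> < \<alpha>" using Ssub by blast
        hence "\<gamma> < \<delta>" using that by (rule less_trans)
        hence "(\<gamma>, \<delta>) \<in> R" unfolding R_def by simp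
        thus "cut c R \<delta> \<gamma> = c \<gamma>" by (rule cut_apply)
      qed
      hence "(\<forall>\<gamma>\<in>S \<alpha>. cut c R \<delta> \<gamma> n = b) \<longleftrightarrow> (\<forall>\<gamma>\<in>S \<alpha>. c \<gamma> n = b)" for n
        by simp
      thus ?thesis unfolding Wc_def by simp
    qed
    define F where "F = (\<lambda>(\<alpha>, b). (Wc c b \<alpha>, b)) ` ({\<alpha>. \<alpha> < \<delta>} \<times> UNIV) \<inter> {p. infinite (fst p)}"
    have "countable ({\<alpha>. \<alpha> < \<delta>} \<times> (UNIV::bool set))" using seg_countable[OF om] by simp
    hence "countable F" unfolding F_def by (intro countable_Int1 countable_image)
    moreover have "\<forall>(W,b)\<in>F. infinite W" unfolding F_def by auto
    ultimately obtain r where r: "\<forall>(W,b)\<in>F. \<exists>m\<in>W. r m \<noteq> b" using row_exists by blast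
    have "Q (cut c R \<delta>) \<delta> r" unfolding Q_def
    proof (intro allI impI)
      fix \<alpha> b assume a: "\<alpha> < \<delta>" and i: "infinite (Wc (cut c R \<delta>) b \<alpha>)"
      have "(Wc c b \<alpha>, b) \<in> (\<lambda>(\<alpha>, b). (Wc c b \<alpha>, b)) ` ({\<alpha>. \<alpha> < \<delta>} \<times> UNIV)"
        using a by (intro rev_image_eqI[of "(\<alpha>, b)"]) simp_all
      hence "(Wc c b \<alpha>, b) \<in> F" unfolding F_def using i Weq[OF a] by simp
      hence "\<exists>m\<in>Wc c b \<alpha>. r m \<noteq> b" using r by blast
      thus "\<exists>m\<in>Wc (cut c R \<delta>) b \<alpha>. r m \<noteq> b" using Weq[OF a] by simp
    qed
    hence "Q (cut c R \<delta>) \<delta> (c \<delta>)" unfolding ceq H_def by (rule someI[of "Q (cut c R \<delta>) \<delta>"])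
    thus ?thesis unfolding Q_def using Weq by simp
  qed
  show ?thesis
  proof (rule exI[of _ c], intro allI impI notI)
    fix Y Z assume YZ: "\<not> countable Y \<and> infinite Z" and hb: "\<exists>b. \<forall>y\<in>Y. \<forall>z\<in>Z. c y z = b"
    from hb obtain b where hom: "\<forall>y\<in>Y. \<forall>z\<in>Z. c y z = b" by (rule exE)
    have "\<exists>B \<subseteq> Y. \<not> countable B \<and> stationary {\<alpha>. B \<inter> {\<beta>. \<beta> < \<alpha>} = S \<alpha>}"
      using Sg YZ by blast
    then obtain B where BY: "B \<subseteq> Y" and Bu: "\<not> countable B"
      and st: "stationary {\<alpha>. B \<inter> {\<beta>. \<beta> < \<alpha>} = S \<alpha>}" by blast
    define T where "T = {\<alpha>. B \<inter> {\<beta>. \<beta> < \<alpha>} = S \<alpha>}"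
    have Tu: "\<not> countable T" using stationary_uncountable[OF om st] unfolding T_def .
    have ZW: "Z \<subseteq> Wc c b \<alpha>" if "\<alpha> \<in> T" for \<alpha>
    proof
      fix z assume z: "z \<in> Z"
      have "S \<alpha> = B \<inter> {\<beta>. \<beta> < \<alpha>}" using that unfolding T_def by simp
      hence "S \<alpha> \<subseteq> Y" using BY by blast
      hence "\<forall>\<gamma>\<in>S \<alpha>. c \<gamma> z = b" using hom z by blast
      thus "z \<in> Wc c b \<alpha>" unfolding Wc_def by simp
    qed
    have "\<forall>\<alpha>\<in>T. \<exists>\<delta>. \<delta> \<in> B \<and> \<alpha> < \<delta>"
      using above_uncountable[OF om Bu] by blast
    hence "\<exists>d. \<forall>\<alpha>\<in>T. d \<alpha> \<in> B \<and> \<alpha> < d \<alpha>" by (rule bchoice)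
    then obtain d where d: "\<forall>\<alpha>\<in>T. d \<alpha> \<in> B \<and> \<alpha> < d \<alpha>" by blast
    have "\<forall>\<alpha>\<in>T. \<exists>k. k \<in> Wc c b \<alpha> \<and> c (d \<alpha>) k \<noteq> b"
    proof
      fix \<alpha> assume a: "\<alpha> \<in> T"
      have "infinite (Wc c b \<alpha>)" using ZW[OF a] YZ finite_subset by blast
      moreover have "\<alpha> < d \<alpha>" using d a by blast
      ultimately have "\<exists>k\<in>Wc c b \<alpha>. c (d \<alpha>) k \<noteq> b"
        using Qc[of "d \<alpha>"] unfolding Q_def by blast
      thus "\<exists>k. k \<in> Wc c b \<alpha> \<and> c (d \<alpha>) k \<noteq> b" by blast
    qed
    hence "\<exists>m. \<forall>\<alpha>\<in>T. m \<alpha> \<in> Wc c b \<alpha> \<and> c (d \<alpha>) (m \<alpha>) \<noteq> b" by (rule bchoice)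
    then obtain m where m: "\<forall>\<alpha>\<in>T. m \<alpha> \<in> Wc c b \<alpha> \<and> c (d \<alpha>) (m \<alpha>) \<noteq> b" by blast
    have "\<exists>n. \<not> countable {\<alpha>\<in>T. m \<alpha> = n}"
    proof (rule ccontr)
      assume "\<not> ?thesis"
      hence "countable (\<Union>n. {\<alpha>\<in>T. m \<alpha> = n})" by blast
      moreover have "(\<Union>n. {\<alpha>\<in>T. m \<alpha> = n}) = T" by blast
      ultimately show False using Tu by simp
    qed
    then obtain n where nu: "\<not> countable {\<alpha>\<in>T. m \<alpha> = n}" by blast
    hence "{\<alpha>\<in>T. m \<alpha> = n} \<noteq> {}" by force
    then obtain \<alpha>1 where a1: "\<alpha>1 \<in> T" "m \<alpha>1 = n" by blast
    obtain \<alpha>2 where a2: "\<alpha>2 \<in> {\<alpha>\<in>T. m \<alpha> = n}" "d \<alpha>1 < \<alpha>2"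
      using above_uncountable[OF om nu, of "d \<alpha>1"] by blast
    have a2T: "\<alpha>2 \<in> T" and a2m: "m \<alpha>2 = n" using a2(1) by simp_all
    have "S \<alpha>2 = B \<inter> {\<beta>. \<beta> < \<alpha>2}" using a2T unfolding T_def by simp
    moreover have "d \<alpha>1 \<in> B" using d a1(1) by blast
    ultimately have dS: "d \<alpha>1 \<in> S \<alpha>2" using a2(2) by blast
    have "m \<alpha>2 \<in> Wc c b \<alpha>2" using m a2T by blast
    hence "n \<in> Wc c b \<alpha>2" using a2m by simp
    hence "c (d \<alpha>1) n = b" using dS unfolding Wc_def by simp
    moreover have "c (d \<alpha>1) (m \<alpha>1) \<noteq> b" using m a1(1) by blast
    ultimately show False using a1(2) by simp
  qed
qed

end
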